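(* Let $G,H$ be graphs such that there is a homomorphism $\gamma:V(G)\to V(H)$. If $H\in$ CBU, then $G\in$ CBU.
   Context: Let $e_1,\ldots,e_d$ be the standard basis of $\mathbb{R}^d$. For $d\ge 1$, a graph belongs to $d$-CBU if one can assign to each vertex an axis-parallel box (product of $d$ closed intervals of positive length) in $\mathbb{R}^d$ such that the boxes have pairwise disjoint interiors, two distinct vertices are adjacent iff their boxes intersect, and any two intersecting boxes intersect in a $(d-1)$-dimensional box orthogonal to $e_1$. CBU is the union of $d$-CBU over all $d\ge 1$. *)

theory Defs
  imports Complex_Main
begin

definition graph :: "'a set \<Rightarrow> ('a \<Rightarrow> 'a \<Rightarrow> bool) \<Rightarrow> bool" where
  "graph V E \<longleftrightarrow> finite V \<and> (\<forall>u v. E u v \<longrightarrow> u \<in> V \<and> v \<in> V)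
     \<and> (\<forall>u v. E u v \<longrightarrow> E v u) \<and> (\<forall>u. \<not> E u u)"

definition graph_hom :: "'a set \<Rightarrow> ('a \<Rightarrow> 'a \<Rightarrow> bool) \<Rightarrow> 'b set \<Rightarrow> ('b \<Rightarrow> 'b \<Rightarrow> bool)
    \<Rightarrow> ('a \<Rightarrow> 'b) \<Rightarrow> bool" where
  "graph_hom V E W F g \<longleftrightarrow> (\<forall>v\<in>V. g v \<in> W) \<and> (\<forall>u v. E u v \<longrightarrow> F (g u) (g v))"

text \<open>Points of R^d are functions nat \<Rightarrow> real vanishing outside {0..<d}
  (coordinate 0 is the direction e_1).\<close>
definition pts :: "nat \<Rightarrow> (nat \<Rightarrow> real) set" where
  "pts d = {x. \<forall>i\<ge>d. x i = 0}"

definition cbox_d :: "nat \<Rightarrow> (nat \<Rightarrow> real) \<Rightarrow> (nat \<Rightarrow> real) \<Rightarrow> (nat \<Rightarrow> real) set" where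
  "cbox_d d a b = {x \<in> pts d. \<forall>i<d. a i \<le> x i \<and> x i \<le> b i}"

definition obox_d :: "nat \<Rightarrow> (nat \<Rightarrow> real) \<Rightarrow> (nat \<Rightarrow> real) \<Rightarrow> (nat \<Rightarrow> real) set" where
  "obox_d d a b = {x \<in> pts d. \<forall>i<d. a i < x i \<and> x i < b i}"

definition orth_facet :: "nat \<Rightarrow> (nat \<Rightarrow> real) set \<Rightarrow> bool" where
  "orth_facet d S \<longleftrightarrow> (\<exists>c lo hi. (\<forall>i. 1 \<le> i \<and> i < d \<longrightarrow> lo i < hi i) \<and>
     S = {x \<in> pts d. x 0 = c \<and> (\<forall>i. 1 \<le> i \<and> i < d \<longrightarrow> lo i \<le> x i \<and> x i \<le> hi i)})"

definition dCBU :: "nat \<Rightarrow> 'a set \<Rightarrow> ('a \<Rightarrow> 'a \<Rightarrow> bool) \<Rightarrow> bool" where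
  "dCBU d V E \<longleftrightarrow> (\<exists>a b :: 'a \<Rightarrow> nat \<Rightarrow> real.
     (\<forall>v\<in>V. \<forall>i<d. a v i < b v i) \<and>
     (\<forall>u\<in>V. \<forall>v\<in>V. u \<noteq> v \<longrightarrow> obox_d d (a u) (b u) \<inter> obox_d d (a v) (b v) = {}) \<and>
     (\<forall>u\<in>V. \<forall>v\<in>V. u \<noteq> v \<longrightarrow>
        (E u v \<longleftrightarrow> cbox_d d (a u) (b u) \<inter> cbox_d d (a v) (b v) \<noteq> {})) \<and>
     (\<forall>u\<in>V. \<forall>v\<in>V. u \<noteq> v \<longrightarrow> cbox_d d (a u) (b u) \<inter> cbox_d d (a v) (b v) \<noteq> {} \<longrightarrow>
        orth_facet d (cbox_d d (a u) (b u) \<inter> cbox_d d (a v) (b v))))"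

definition CBU :: "'a set \<Rightarrow> ('a \<Rightarrow> 'a \<Rightarrow> bool) \<Rightarrow> bool" where
  "CBU V E \<longleftrightarrow> (\<exists>d\<ge>1. dCBU d V E)"

end

theory Submission
  imports Defs
begin

definition trunc :: "nat \<Rightarrow> (nat \<Rightarrow> real) \<Rightarrow> (nat \<Rightarrow> real)" where
  "trunc d x = (\<lambda>i. if i < d then x i else 0)"

lemma cbox_trunc:
  assumes "x \<in> cbox_d (d+n) A B"
  shows "trunc d x \<in> cbox_d d A B"
  using assms unfolding cbox_d_def pts_def trunc_def by auto

lemma obox_trunc:
  assumes "x \<in> obox_d (d+n) A B"
  shows "trunc d x \<in> obox_d d A B"
  using assms unfolding obox_d_def pts_def trunc_def by auto

lemma cbox_cong:
  assumes "\<And>i. i < d \<Longrightarrow> A i = A' i" "\<And>i. i < d \<Longrightarrow> B i = B' i"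
  shows "cbox_d d A B = cbox_d d A' B'"
  using assms unfolding cbox_d_def by auto

lemma obox_cong:
  assumes "\<And>i. i < d \<Longrightarrow> A i = A' i" "\<And>i. i < d \<Longrightarrow> B i = B' i"
  shows "obox_d d A B = obox_d d A' B'"
  using assms unfolding obox_d_def by auto

lemma cbox_ext:
  assumes "x \<in> pts (d+n)" "trunc d x \<in> cbox_d d A B"
    "\<And>i. d \<le> i \<Longrightarrow> i < d+n \<Longrightarrow> A i \<le> x i \<and> x i \<le> B i"
  shows "x \<in> cbox_d (d+n) A B"
proof -
  have "\<forall>i<d+n. A i \<le> x i \<and> x i \<le> B i"
  proof (intro allI impI)
    fix i assume i: "i < d + n"
    show "A i \<le> x i \<and> x i \<le> B i"
    proof (cases "i < d")
      case True thus ?thesis using assms(2) unfolding cbox_d_def trunc_def by auto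
    next
      case False thus ?thesis using assms(3) i by auto
    qed
  qed
  thus ?thesis using assms(1) unfolding cbox_d_def by auto
qed

theorem mainTheorem16:
  fixes V :: "'a set" and E :: "'a \<Rightarrow> 'a \<Rightarrow> bool"
    and W :: "'b set" and F :: "'b \<Rightarrow> 'b \<Rightarrow> bool"
    and \<gamma> :: "'a \<Rightarrow> 'b"
  assumes "graph V E" and "graph W F"
    and "graph_hom V E W F \<gamma>"
    and "CBU W F"
  shows "CBU V E"
proof -
  have finV: "finite V" and Esym: "\<And>u v. E u v \<Longrightarrow> E v u"
    and EV: "\<And>u v. E u v \<Longrightarrow> u \<in> V \<and> v \<in> V"
    using assms(1) unfolding graph_def by auto
  have Firr: "\<And>u. \<not> F u u" using assms(2) unfolding graph_def by auto
  have hom: "\<And>u v. E u v \<Longrightarrow> F (\<gamma> u) (\<gamma> v)" using assms(3) unfolding graph_hom_def by auto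
  obtain d where d1: "d \<ge> 1" and dC: "dCBU d W F" using assms(4) unfolding CBU_def by auto
  obtain a b where
    ab1: "\<forall>v\<in>W. \<forall>i<d. a v i < b v i" and
    ab2: "\<forall>u\<in>W. \<forall>v\<in>W. u \<noteq> v \<longrightarrow> obox_d d (a u) (b u) \<inter> obox_d d (a v) (b v) = {}" and
    ab3: "\<forall>u\<in>W. \<forall>v\<in>W. u \<noteq> v \<longrightarrow>
        (F u v \<longleftrightarrow> cbox_d d (a u) (b u) \<inter> cbox_d d (a v) (b v) \<noteq> {})" and
    ab4: "\<forall>u\<in>W. \<forall>v\<in>W. u \<noteq> v \<longrightarrow> cbox_d d (a u) (b u) \<inter> cbox_d d (a v) (b v) \<noteq> {} \<longrightarrow>
        orth_facet d (cbox_d d (a u) (b u) \<inter> cbox_d d (a v) (b v))"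
    using dC unfolding dCBU_def apply (elim exE conjE) apply (rule that) apply assumption+ done
  have gW: "\<And>v. v \<in> V \<Longrightarrow> \<gamma> v \<in> W" using assms(3) unfolding graph_hom_def by auto
  define n where "n = card V"
  obtain f :: "'a \<Rightarrow> nat" where fb: "bij_betw f V {0..<n}"
    using finV ex_bij_betw_finite_nat unfolding n_def by blast
  have finj: "\<And>u v. u \<in> V \<Longrightarrow> v \<in> V \<Longrightarrow> f u = f v \<Longrightarrow> u = v"
    using fb unfolding bij_betw_def inj_on_def by auto
  have fn: "\<And>u. u \<in> V \<Longrightarrow> f u < n" using fb unfolding bij_betw_def by auto
  define A where "A v i = (if i < d then a (\<gamma> v) i else if f v = i - d then 0
      else if (\<exists>w\<in>V. f w = i - d \<and> E w v) then 0 else (2::real))" for v i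
  define B where "B v i = (if i < d then b (\<gamma> v) i else if f v = i - d then 1 else (3::real))" for v i
  have Ccong: "cbox_d d (A v) (B v) = cbox_d d (a (\<gamma> v)) (b (\<gamma> v))" for v
    by (rule cbox_cong) (auto simp: A_def B_def)
  have Ocong: "obox_d d (A v) (B v) = obox_d d (a (\<gamma> v)) (b (\<gamma> v))" for v
    by (rule obox_cong) (auto simp: A_def B_def)
  have Au: "A u (d + f u) = 0" "B u (d + f u) = 1" for u by (auto simp: A_def B_def)
  have Av: "u \<in> V \<Longrightarrow> v \<in> V \<Longrightarrow> u \<noteq> v \<Longrightarrow> A v (d + f u) = (if E u v then 0 else 2) \<and> B v (d + f u) = 3" for u v
    using finj unfolding A_def B_def by auto
  have c3: "E u v \<longleftrightarrow> cbox_d (d+n) (A u) (B u) \<inter> cbox_d (d+n) (A v) (B v) \<noteq> {}"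
    if uv: "u \<in> V" "v \<in> V" "u \<noteq> v" for u v
  proof
    assume e: "E u v"
    have Fe: "F (\<gamma> u) (\<gamma> v)" using hom e .
    hence ne: "\<gamma> u \<noteq> \<gamma> v" using Firr by auto
    then obtain y where y: "y \<in> cbox_d d (a (\<gamma> u)) (b (\<gamma> u)) \<inter> cbox_d d (a (\<gamma> v)) (b (\<gamma> v))"
      using ab3 gW uv Fe by blast
    define x where "x i = (if i < d then y i else if i < d + n then
        (if i - d = f u \<or> i - d = f v then 1/2 else 5/2) else (0::real))" for i
    have tx: "trunc d x = y" using y unfolding x_def trunc_def cbox_d_def pts_def by auto
    have px: "x \<in> pts (d+n)" unfolding x_def pts_def by auto
    have "x \<in> cbox_d (d+n) (A u) (B u)"
      apply (rule cbox_ext[OF px])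
      using y tx Ccong apply simp
      using e Esym[OF e] finj uv unfolding x_def A_def B_def by auto
    moreover have "x \<in> cbox_d (d+n) (A v) (B v)"
      apply (rule cbox_ext[OF px])
      using y tx Ccong apply simp
      using e Esym[OF e] finj uv unfolding x_def A_def B_def by auto
    ultimately show "cbox_d (d+n) (A u) (B u) \<inter> cbox_d (d+n) (A v) (B v) \<noteq> {}" by blast
  next
    assume "cbox_d (d+n) (A u) (B u) \<inter> cbox_d (d+n) (A v) (B v) \<noteq> {}"
    then obtain x where x: "x \<in> cbox_d (d+n) (A u) (B u)" "x \<in> cbox_d (d+n) (A v) (B v)" by blast
    have lt: "d + f u < d + n" using fn uv by auto
    have "x (d + f u) \<le> B u (d + f u)" using x(1) lt unfolding cbox_d_def by blast
    hence "x (d + f u) \<le> 1" using Au[of u] by simp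
    moreover have "A v (d + f u) \<le> x (d + f u)" using x(2) lt unfolding cbox_d_def by blast
    ultimately show "E u v" using Av[OF uv] by (auto split: if_splits)
  qed
  have "dCBU (d+n) V E"
    unfolding dCBU_def
  proof (rule exI[of _ A], rule exI[of _ B], intro conjI ballI allI impI)
    fix v i assume "v \<in> V" "i < d + n"
    thus "A v i < B v i" using ab1 gW unfolding A_def B_def by auto
  next
    fix u v assume uv: "u \<in> V" "v \<in> V" "u \<noteq> v"
    show "obox_d (d+n) (A u) (B u) \<inter> obox_d (d+n) (A v) (B v) = {}"
    proof (rule ccontr)
      assume "obox_d (d+n) (A u) (B u) \<inter> obox_d (d+n) (A v) (B v) \<noteq> {}"
      then obtain x where x: "x \<in> obox_d (d+n) (A u) (B u)" "x \<in> obox_d (d+n) (A v) (B v)" by blast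
      show False
      proof (cases "\<gamma> u = \<gamma> v")
        case True
        have "\<not> E u v" using hom Firr True by metis
        have lt: "d + f u < d + n" using fn uv by auto
        have "x (d + f u) < B u (d + f u)" using x(1) lt unfolding obox_d_def by blast
        hence "x (d + f u) < 1" using Au[of u] by simp
        moreover have "A v (d + f u) < x (d + f u)" using x(2) lt unfolding obox_d_def by blast
        ultimately show False using Av[OF uv] \<open>\<not> E u v\<close> by auto
      next
        case False
        have "trunc d x \<in> obox_d d (a (\<gamma> u)) (b (\<gamma> u))" "trunc d x \<in> obox_d d (a (\<gamma> v)) (b (\<gamma> v))"
          using obox_trunc[OF x(1)] obox_trunc[OF x(2)] Ocong by auto
        thus False using ab2 gW uv False by blast
      qed
    qed
  next
    fix u v assume uv: "u \<in> V" "v \<in> V" "u \<noteq> v"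
    show "E u v \<longleftrightarrow> cbox_d (d+n) (A u) (B u) \<inter> cbox_d (d+n) (A v) (B v) \<noteq> {}"
      using c3[OF uv] .
  next
    fix u v assume uv: "u \<in> V" "v \<in> V" "u \<noteq> v"
      and nz: "cbox_d (d+n) (A u) (B u) \<inter> cbox_d (d+n) (A v) (B v) \<noteq> {}"
    have e: "E u v" using c3[OF uv] nz by blast
    have Fe: "F (\<gamma> u) (\<gamma> v)" using hom e .
    hence ne: "\<gamma> u \<noteq> \<gamma> v" using Firr by auto
    have "cbox_d d (a (\<gamma> u)) (b (\<gamma> u)) \<inter> cbox_d d (a (\<gamma> v)) (b (\<gamma> v)) \<noteq> {}"
      using ab3 gW uv Fe ne by blast
    hence "orth_facet d (cbox_d d (a (\<gamma> u)) (b (\<gamma> u)) \<inter> cbox_d d (a (\<gamma> v)) (b (\<gamma> v)))"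
      using ab4 gW uv ne by blast
    then obtain c lo hi where lohi: "\<forall>i. 1 \<le> i \<and> i < d \<longrightarrow> lo i < hi i" and
      S: "cbox_d d (a (\<gamma> u)) (b (\<gamma> u)) \<inter> cbox_d d (a (\<gamma> v)) (b (\<gamma> v)) =
        {x \<in> pts d. x 0 = c \<and> (\<forall>i. 1 \<le> i \<and> i < d \<longrightarrow> lo i \<le> x i \<and> x i \<le> hi i)}"
      unfolding orth_facet_def by blast
    define lo' where "lo' i = (if i < d then lo i else max (A u i) (A v i))" for i
    define hi' where "hi' i = (if i < d then hi i else min (B u i) (B v i))" for i
    show "orth_facet (d+n) (cbox_d (d+n) (A u) (B u) \<inter> cbox_d (d+n) (A v) (B v))"
      unfolding orth_facet_def
    proof (rule exI[of _ c], rule exI[of _ lo'], rule exI[of _ hi'], intro conjI allI impI)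
      fix i assume i: "1 \<le> i \<and> i < d + n"
      show "lo' i < hi' i"
      proof (cases "i < d")
        case True thus ?thesis using lohi i unfolding lo'_def hi'_def by auto
      next
        case False
        thus ?thesis using e Esym[OF e] finj uv unfolding lo'_def hi'_def A_def B_def by auto
      qed
    next
      show "cbox_d (d+n) (A u) (B u) \<inter> cbox_d (d+n) (A v) (B v) =
        {x \<in> pts (d+n). x 0 = c \<and> (\<forall>i. 1 \<le> i \<and> i < d+n \<longrightarrow> lo' i \<le> x i \<and> x i \<le> hi' i)}"
      proof (intro equalityI subsetI)
        fix x assume x: "x \<in> cbox_d (d+n) (A u) (B u) \<inter> cbox_d (d+n) (A v) (B v)"
        have "trunc d x \<in> {x \<in> pts d. x 0 = c \<and> (\<forall>i. 1 \<le> i \<and> i < d \<longrightarrow> lo i \<le> x i \<and> x i \<le> hi i)}"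
        proof -
          have "trunc d x \<in> cbox_d d (A u) (B u)" "trunc d x \<in> cbox_d d (A v) (B v)"
            using cbox_trunc[of x d n] x by auto
          hence "trunc d x \<in> cbox_d d (a (\<gamma> u)) (b (\<gamma> u)) \<inter> cbox_d d (a (\<gamma> v)) (b (\<gamma> v))"
            using Ccong by auto
          thus ?thesis using S by simp
        qed
        hence t: "trunc d x 0 = c" "\<And>i. 1 \<le> i \<Longrightarrow> i < d \<Longrightarrow> lo i \<le> x i \<and> x i \<le> hi i"
          unfolding trunc_def by auto
        show "x \<in> {x \<in> pts (d+n). x 0 = c \<and> (\<forall>i. 1 \<le> i \<and> i < d+n \<longrightarrow> lo' i \<le> x i \<and> x i \<le> hi' i)}"
          using x t d1 unfolding cbox_d_def lo'_def hi'_def trunc_def by auto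
      next
        fix x assume x: "x \<in> {x \<in> pts (d+n). x 0 = c \<and> (\<forall>i. 1 \<le> i \<and> i < d+n \<longrightarrow> lo' i \<le> x i \<and> x i \<le> hi' i)}"
        have px: "x \<in> pts (d+n)" using x by auto
        have "trunc d x \<in> {x \<in> pts d. x 0 = c \<and> (\<forall>i. 1 \<le> i \<and> i < d \<longrightarrow> lo i \<le> x i \<and> x i \<le> hi i)}"
          using x d1 unfolding trunc_def pts_def lo'_def hi'_def by auto
        hence tr: "trunc d x \<in> cbox_d d (A u) (B u)" "trunc d x \<in> cbox_d d (A v) (B v)"
          using S Ccong by auto
        have ext: "A w i \<le> x i \<and> x i \<le> B w i" if "w = u \<or> w = v" "d \<le> i" "i < d + n" for w i
        proof -
          have "1 \<le> i" using that d1 by auto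
          hence "lo' i \<le> x i \<and> x i \<le> hi' i" using x that by auto
          thus ?thesis using that unfolding lo'_def hi'_def by auto
        qed
        show "x \<in> cbox_d (d+n) (A u) (B u) \<inter> cbox_d (d+n) (A v) (B v)"
          using cbox_ext[OF px tr(1)] cbox_ext[OF px tr(2)] ext by auto
      qed
    qed
  qed
  thus ?thesis unfolding CBU_def using d1 by (intro exI[of _ "d+n"]) auto
qed

end
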